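(* Let $\mathbb K$ be a field with $2\in\mathbb K^\times$, $A$ a unital commutative associative $\mathbb K$-algebra, $\mathfrak k$ a $\mathbb K$-Lie algebra, and $\mathfrak g=A\otimes\mathfrak k$. With the maps $\Phi$ and $\Psi$ described in the context (which are well-defined linear maps), the sequence $$\{0\}\to \mathrm{Alt}^2(\mathfrak g/\mathfrak g')_{1,3}\oplus \mathrm{Lin}(A,H^2(\mathfrak k))\xrightarrow{\ \Phi\ } H^2(\mathfrak g)\xrightarrow{\ \Psi\ } \mathrm{Lin}\big((\Omega^1(A),d_A(A)),(Z^3(\mathfrak k)_\Gamma,B^3(\mathfrak k)_\Gamma)\big)\to\{0\}$$ is exact.
   Context: $\mathfrak g=A\otimes\mathfrak k$ carries the bracket $[a\otimes x,a'\otimes x']=aa'\otimes[x,x']$; write $ax:=a\otimes x$ and $\mathbf 1$ for the unit of $A$. Put $\mathfrak k'=[\mathfrak k,\mathfrak k]$, $\mathfrak g'=A\otimes\mathfrak k'$, so $\mathfrak g/\mathfrak g'\cong A\otimes(\mathfrak k/\mathfrak k')$. For a vector space $V$, identify $\Lambda^2(V)$, $S^2(V)$ with antisymmetric/symmetric tensors in $V\otimes V$ via $v\wedge w=\tfrac12(v\otimes w-w\otimes v)$, $v\vee w=\tfrac12(v\otimes w+w\otimes v)$. An alternating bilinear map $f$ on $\mathfrak g$ is identified with the linear map on $\Lambda^2(\mathfrak g)$ with $f(u\wedge v)=f(u,v)$. All cohomology here has trivial coefficients $\mathbb K$: $H^2(\mathfrak g)$ is the space of $\mathbb K$-valued Lie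 algebra 2-cocycles on $\mathfrak g$ modulo coboundaries $(u,v)\mapsto-\ell([u,v])$, $\ell\in\mathfrak g^*$; $Z^p(\mathfrak k),B^p(\mathfrak k),H^p(\mathfrak k)$ are the usual Chevalley–Eilenberg cocycles, coboundaries, cohomology of $\mathfrak k$ with trivial coefficients. Decomposition: let $I_A\subseteq S^2(A)$ be the kernel of multiplication $S^2(A)\to A$. Define $p_1:\Lambda^2(\mathfrak g)\to\Lambda^2(A)\otimes S^2(\mathfrak k)$, $p_1(ax\wedge by)=a\wedge b\otimes x\vee y$; $p_2:\Lambda^2(\mathfrak g)\to A\otimes\Lambda^2(\mathfrak k)$, $p_2(ax\wedge by)=ab\otimes x\wedge y$; $p_3:\Lambda^2(\mathfrak g)\to I_A\otimes\Lambda^2(\mathfrak k)$, $p_3(ax\wedge by)=(a\vee b-ab\vee\mathbf 1)\otimes x\wedge y$. Then $(p_1,p_2,p_3)$ is a linear isomorphism onto the direct sum of the three targets. For a linear $f$ on $\Lambda^2(\mathfrak g)$ write $f=f_1\circ p_1+f_2\circ p_2+f_3\circ p_3$ and $\tilde f_1(a,b)(x,y):=f_1(a\wedge b\otimes x\vee y)$. Koszul map: $\mathrm{Sym}^2(\mathfrak k)^{\mathfrak k}$ is the space of invariant symmetric bilinear forms $\kappa$ on $\mathfrak k$ ($\kappa([x,y],z)=\kappa(x,[y,z])$), and $\Gamma(\kappa)(x,y,z):=\kappa([x,y],z)$, $\Gamma:\mathrm{Sym}^2(\mathfrak k)^{\mathfrak k}\to Z^3(\mathfrak k)$. Put $Z^3(\mathfrak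 k)_\Gamma:=\mathrm{im}\,\Gamma$, $B^3(\mathfrak k)_\Gamma:=B^3(\mathfrak k)\cap\mathrm{im}\,\Gamma$. $(\Omega^1(A),d_A)$ is the universal differential module (Kähler differentials) of $A$. For pairs of spaces $X'\subseteq X$, $Y'\subseteq Y$, $\mathrm{Lin}((X,X'),(Y,Y'))=\{f\in\mathrm{Lin}(X,Y):f(X')\subseteq Y'\}$. $\mathrm{Alt}^2(\mathfrak g/\mathfrak g')_{1,3}$ is the space of alternating bilinear forms $\omega$ on $\mathfrak g/\mathfrak g'$ with $\omega(a\bar x,\mathbf 1\bar y)+\omega(\mathbf 1\bar x,a\bar y)=0$ for all $a\in A$, $\bar x,\bar y\in\mathfrak k/\mathfrak k'$. $\Phi(\omega,\phi)=[\omega\circ(q\times q)]+[f_\phi]$, where $q:\mathfrak g\to\mathfrak g/\mathfrak g'$ is the quotient map and $f_\phi(ax,by)=\tilde\phi(ab)(x,y)$ for any linear lift $\tilde\phi:A\to Z^2(\mathfrak k)$ of $\phi$. $\Psi([f])$ is the linear map $\Omega^1(A)\to Z^3(\mathfrak k)_\Gamma$ with $a\,d_A(b)-b\,d_A(a)\mapsto\Gamma(\tilde f_1(a,b))$. *)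

theory Defs
  imports Complex_Main "HOL-Library.Function_Algebras"
begin

definition lin_map ::
  "('k::field \<Rightarrow> 'v::ab_group_add \<Rightarrow> 'v) \<Rightarrow> ('k \<Rightarrow> 'w::ab_group_add \<Rightarrow> 'w) \<Rightarrow> ('v \<Rightarrow> 'w) \<Rightarrow> bool"
  where "lin_map s t f \<longleftrightarrow> (\<forall>x y. f (x + y) = f x + f y) \<and> (\<forall>c x. f (s c x) = t c (f x))"

definition fsc2 :: "'k::field \<Rightarrow> ('x \<Rightarrow> 'y \<Rightarrow> 'k) \<Rightarrow> ('x \<Rightarrow> 'y \<Rightarrow> 'k)"
  where "fsc2 c g = (\<lambda>x y. c * g x y)"
definition fsc3 :: "'k::field \<Rightarrow> ('x \<Rightarrow> 'y \<Rightarrow> 'z \<Rightarrow> 'k) \<Rightarrow> ('x \<Rightarrow> 'y \<Rightarrow> 'z \<Rightarrow> 'k)"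
  where "fsc3 c g = (\<lambda>x y z. c * g x y z)"

definition bilin ::
  "('k::field \<Rightarrow> 'u::ab_group_add \<Rightarrow> 'u) \<Rightarrow> ('k \<Rightarrow> 'v::ab_group_add \<Rightarrow> 'v) \<Rightarrow> ('u \<Rightarrow> 'v \<Rightarrow> 'k) \<Rightarrow> bool"
  where "bilin s1 s2 B \<longleftrightarrow> (\<forall>y. lin_map s1 (*) (\<lambda>x. B x y)) \<and> (\<forall>x. lin_map s2 (*) (B x))"

definition trilin ::
  "('k::field \<Rightarrow> 'u::ab_group_add \<Rightarrow> 'u) \<Rightarrow> ('u \<Rightarrow> 'u \<Rightarrow> 'u \<Rightarrow> 'k) \<Rightarrow> bool"
  where "trilin s T \<longleftrightarrow> (\<forall>y z. lin_map s (*) (\<lambda>x. T x y z)) \<and> (\<forall>x z. lin_map s (*) (\<lambda>y. T x y z))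
           \<and> (\<forall>x y. lin_map s (*) (T x y))"

definition quadlin ::
  "('k::field \<Rightarrow> 'a::ab_group_add \<Rightarrow> 'a) \<Rightarrow> ('k \<Rightarrow> 'l::ab_group_add \<Rightarrow> 'l) \<Rightarrow>
   ('a \<Rightarrow> 'l \<Rightarrow> 'a \<Rightarrow> 'l \<Rightarrow> 'k) \<Rightarrow> bool"
  where "quadlin sA sL F \<longleftrightarrow>
     (\<forall>x b y. lin_map sA (*) (\<lambda>a. F a x b y)) \<and> (\<forall>a b y. lin_map sL (*) (\<lambda>x. F a x b y)) \<and>
     (\<forall>a x y. lin_map sA (*) (\<lambda>b. F a x b y)) \<and> (\<forall>a x b. lin_map sL (*) (\<lambda>y. F a x b y))"

definition comm_algebra :: "('k::field \<Rightarrow> 'a::comm_ring_1 \<Rightarrow> 'a) \<Rightarrow> bool"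
  where "comm_algebra sA \<longleftrightarrow> vector_space sA \<and> (\<forall>c a b. sA c (a * b) = sA c a * b)"

definition lie_algebra :: "('k::field \<Rightarrow> 'l::ab_group_add \<Rightarrow> 'l) \<Rightarrow> ('l \<Rightarrow> 'l \<Rightarrow> 'l) \<Rightarrow> bool"
  where "lie_algebra sL br \<longleftrightarrow> vector_space sL \<and>
     (\<forall>y. lin_map sL sL (\<lambda>x. br x y)) \<and> (\<forall>x. lin_map sL sL (br x)) \<and>
     (\<forall>x. br x x = 0) \<and>
     (\<forall>x y z. br x (br y z) + br y (br z x) + br z (br x y) = 0)"

definition derived :: "('k::field \<Rightarrow> 'l::ab_group_add \<Rightarrow> 'l) \<Rightarrow> ('l \<Rightarrow> 'l \<Rightarrow> 'l) \<Rightarrow> 'l set"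
  where "derived sL br = module.span sL {br x y | x y. True}"

definition alt2 :: "('k::field \<Rightarrow> 'l::ab_group_add \<Rightarrow> 'l) \<Rightarrow> ('l \<Rightarrow> 'l \<Rightarrow> 'k) \<Rightarrow> bool"
  where "alt2 sL \<omega> \<longleftrightarrow> bilin sL sL \<omega> \<and> (\<forall>x. \<omega> x x = 0)"

definition alt3 :: "('k::field \<Rightarrow> 'l::ab_group_add \<Rightarrow> 'l) \<Rightarrow> ('l \<Rightarrow> 'l \<Rightarrow> 'l \<Rightarrow> 'k) \<Rightarrow> bool"
  where "alt3 sL \<theta> \<longleftrightarrow> trilin sL \<theta> \<and>
     (\<forall>x z. \<theta> x x z = 0) \<and> (\<forall>x y. \<theta> x y y = 0) \<and> (\<forall>x y. \<theta> x y x = 0)"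

text \<open>Chevalley--Eilenberg differentials with trivial coefficients.\<close>
definition d2 :: "('l \<Rightarrow> 'l \<Rightarrow> 'l) \<Rightarrow> ('l \<Rightarrow> 'l \<Rightarrow> 'k::field) \<Rightarrow> ('l \<Rightarrow> 'l \<Rightarrow> 'l \<Rightarrow> 'k)"
  where "d2 br \<eta> = (\<lambda>x0 x1 x2. - \<eta> (br x0 x1) x2 + \<eta> (br x0 x2) x1 - \<eta> (br x1 x2) x0)"

definition d3 :: "('l \<Rightarrow> 'l \<Rightarrow> 'l) \<Rightarrow> ('l \<Rightarrow> 'l \<Rightarrow> 'l \<Rightarrow> 'k::field) \<Rightarrow> ('l \<Rightarrow> 'l \<Rightarrow> 'l \<Rightarrow> 'l \<Rightarrow> 'k)"
  where "d3 br \<theta> = (\<lambda>x0 x1 x2 x3.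
      - \<theta> (br x0 x1) x2 x3 + \<theta> (br x0 x2) x1 x3 - \<theta> (br x0 x3) x1 x2
      - \<theta> (br x1 x2) x0 x3 + \<theta> (br x1 x3) x0 x2 - \<theta> (br x2 x3) x0 x1)"

definition Z2 :: "('k::field \<Rightarrow> 'l::ab_group_add \<Rightarrow> 'l) \<Rightarrow> ('l \<Rightarrow> 'l \<Rightarrow> 'l) \<Rightarrow> ('l \<Rightarrow> 'l \<Rightarrow> 'k) \<Rightarrow> bool"
  where "Z2 sL br \<omega> \<longleftrightarrow> alt2 sL \<omega> \<and> d2 br \<omega> = (\<lambda>x y z. 0)"

definition B2 :: "('k::field \<Rightarrow> 'l::ab_group_add \<Rightarrow> 'l) \<Rightarrow> ('l \<Rightarrow> 'l \<Rightarrow> 'l) \<Rightarrow> ('l \<Rightarrow> 'l \<Rightarrow> 'k) \<Rightarrow> bool"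
  where "B2 sL br \<omega> \<longleftrightarrow> (\<exists>lam. lin_map sL (*) lam \<and> \<omega> = (\<lambda>x y. - lam (br x y)))"

definition Z3 :: "('k::field \<Rightarrow> 'l::ab_group_add \<Rightarrow> 'l) \<Rightarrow> ('l \<Rightarrow> 'l \<Rightarrow> 'l) \<Rightarrow> ('l \<Rightarrow> 'l \<Rightarrow> 'l \<Rightarrow> 'k) \<Rightarrow> bool"
  where "Z3 sL br \<theta> \<longleftrightarrow> alt3 sL \<theta> \<and> d3 br \<theta> = (\<lambda>x y z w. 0)"

definition B3 :: "('k::field \<Rightarrow> 'l::ab_group_add \<Rightarrow> 'l) \<Rightarrow> ('l \<Rightarrow> 'l \<Rightarrow> 'l) \<Rightarrow> ('l \<Rightarrow> 'l \<Rightarrow> 'l \<Rightarrow> 'k) \<Rightarrow> bool"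
  where "B3 sL br \<theta> \<longleftrightarrow> (\<exists>\<eta>. alt2 sL \<eta> \<and> \<theta> = d2 br \<eta>)"

section \<open>Koszul map\<close>

text \<open>Invariant symmetric bilinear forms on k, i.e. elements of Sym^2(k)^k.\<close>
definition inv_sym :: "('k::field \<Rightarrow> 'l::ab_group_add \<Rightarrow> 'l) \<Rightarrow> ('l \<Rightarrow> 'l \<Rightarrow> 'l) \<Rightarrow> ('l \<Rightarrow> 'l \<Rightarrow> 'k) \<Rightarrow> bool"
  where "inv_sym sL br \<kappa> \<longleftrightarrow> bilin sL sL \<kappa> \<and> (\<forall>x y. \<kappa> x y = \<kappa> y x) \<and>
     (\<forall>x y z. \<kappa> (br x y) z = \<kappa> x (br y z))"

definition Gamma :: "('l \<Rightarrow> 'l \<Rightarrow> 'l) \<Rightarrow> ('l \<Rightarrow> 'l \<Rightarrow> 'k) \<Rightarrow> ('l \<Rightarrow> 'l \<Rightarrow> 'l \<Rightarrow> 'k)"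
  where "Gamma br \<kappa> = (\<lambda>x y z. \<kappa> (br x y) z)"

text \<open>Z^3(k)_Gamma = im Gamma and B^3(k)_Gamma = B^3(k) \<inter> im Gamma.\<close>
definition Z3_Gamma :: "('k::field \<Rightarrow> 'l::ab_group_add \<Rightarrow> 'l) \<Rightarrow> ('l \<Rightarrow> 'l \<Rightarrow> 'l) \<Rightarrow> ('l \<Rightarrow> 'l \<Rightarrow> 'l \<Rightarrow> 'k) \<Rightarrow> bool"
  where "Z3_Gamma sL br \<theta> \<longleftrightarrow> (\<exists>\<kappa>. inv_sym sL br \<kappa> \<and> \<theta> = Gamma br \<kappa>)"

definition B3_Gamma :: "('k::field \<Rightarrow> 'l::ab_group_add \<Rightarrow> 'l) \<Rightarrow> ('l \<Rightarrow> 'l \<Rightarrow> 'l) \<Rightarrow> ('l \<Rightarrow> 'l \<Rightarrow> 'l \<Rightarrow> 'k) \<Rightarrow> bool"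
  where "B3_Gamma sL br \<theta> \<longleftrightarrow> B3 sL br \<theta> \<and> Z3_Gamma sL br \<theta>"

section \<open>2-cochains on g = A \<otimes> k, via their values on pure tensors\<close>

text \<open>A bilinear form f on g = A \<otimes> k is determined by the 4-linear map
  F a x b y = f(ax, by).  Since 2 is invertible, f is alternating iff
  F a x b y = - F b y a x.\<close>
definition g_alt2 ::
  "('k::field \<Rightarrow> 'a::comm_ring_1 \<Rightarrow> 'a) \<Rightarrow> ('k \<Rightarrow> 'l::ab_group_add \<Rightarrow> 'l) \<Rightarrow>
   ('a \<Rightarrow> 'l \<Rightarrow> 'a \<Rightarrow> 'l \<Rightarrow> 'k) \<Rightarrow> bool"
  where "g_alt2 sA sL F \<longleftrightarrow> quadlin sA sL F \<and> (\<forall>a x b y. F a x b y = - F b y a x)"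

text \<open>2-cocycle condition f([u,v],w) + f([v,w],u) + f([w,u],v) = 0 on pure tensors.\<close>
definition g_Z2 ::
  "('k::field \<Rightarrow> 'a::comm_ring_1 \<Rightarrow> 'a) \<Rightarrow> ('k \<Rightarrow> 'l::ab_group_add \<Rightarrow> 'l) \<Rightarrow> ('l \<Rightarrow> 'l \<Rightarrow> 'l) \<Rightarrow>
   ('a \<Rightarrow> 'l \<Rightarrow> 'a \<Rightarrow> 'l \<Rightarrow> 'k) \<Rightarrow> bool"
  where "g_Z2 sA sL br F \<longleftrightarrow> g_alt2 sA sL F \<and>
    (\<forall>a x b y c z. F (a * b) (br x y) c z + F (b * c) (br y z) a x + F (c * a) (br z x) b y = 0)"

text \<open>2-coboundaries (u,v) \<mapsto> - l([u,v]) with l \<in> g^*; a linear l on A \<otimes> k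
  is the same as a bilinear map on A \<times> k.\<close>
definition g_B2 ::
  "('k::field \<Rightarrow> 'a::comm_ring_1 \<Rightarrow> 'a) \<Rightarrow> ('k \<Rightarrow> 'l::ab_group_add \<Rightarrow> 'l) \<Rightarrow> ('l \<Rightarrow> 'l \<Rightarrow> 'l) \<Rightarrow>
   ('a \<Rightarrow> 'l \<Rightarrow> 'a \<Rightarrow> 'l \<Rightarrow> 'k) \<Rightarrow> bool"
  where "g_B2 sA sL br F \<longleftrightarrow>
    (\<exists>l. bilin sA sL l \<and> (\<forall>a x b y. F a x b y = - l (a * b) (br x y)))"

text \<open>Alt^2(g/g')_{1,3}, pulled back along q \<times> q: alternating forms on g vanishing
  whenever an argument lies in g' = A \<otimes> k', and satisfying the (1,3)-condition.\<close>
definition alt13 ::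
  "('k::field \<Rightarrow> 'a::comm_ring_1 \<Rightarrow> 'a) \<Rightarrow> ('k \<Rightarrow> 'l::ab_group_add \<Rightarrow> 'l) \<Rightarrow> ('l \<Rightarrow> 'l \<Rightarrow> 'l) \<Rightarrow>
   ('a \<Rightarrow> 'l \<Rightarrow> 'a \<Rightarrow> 'l \<Rightarrow> 'k) \<Rightarrow> bool"
  where "alt13 sA sL br W \<longleftrightarrow> g_alt2 sA sL W \<and>
    (\<forall>a x b y. x \<in> derived sL br \<longrightarrow> W a x b y = 0) \<and>
    (\<forall>a x y. W a x 1 y + W 1 x a y = 0)"

text \<open>Linear lifts A \<rightarrow> Z^2(k) of elements of Lin(A, H^2(k)).\<close>
definition H2_lift ::
  "('k::field \<Rightarrow> 'a::comm_ring_1 \<Rightarrow> 'a) \<Rightarrow> ('k \<Rightarrow> 'l::ab_group_add \<Rightarrow> 'l) \<Rightarrow> ('l \<Rightarrow> 'l \<Rightarrow> 'l) \<Rightarrow>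
   ('a \<Rightarrow> 'l \<Rightarrow> 'l \<Rightarrow> 'k) \<Rightarrow> bool"
  where "H2_lift sA sL br \<phi> \<longleftrightarrow> lin_map sA fsc2 \<phi> \<and> (\<forall>a. Z2 sL br (\<phi> a))"

text \<open>Representative of Phi(omega, phi) = [omega o (q \<times> q)] + [f_phi].\<close>
definition Phi_rep ::
  "('a::comm_ring_1 \<Rightarrow> 'l \<Rightarrow> 'a \<Rightarrow> 'l \<Rightarrow> 'k::field) \<Rightarrow> ('a \<Rightarrow> 'l \<Rightarrow> 'l \<Rightarrow> 'k) \<Rightarrow>
   ('a \<Rightarrow> 'l \<Rightarrow> 'a \<Rightarrow> 'l \<Rightarrow> 'k)"
  where "Phi_rep W \<phi> = (\<lambda>a x b y. W a x b y + \<phi> (a * b) x y)"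

text \<open>tilde f_1(a,b)(x,y) = f_1(a \<and> b \<otimes> x \<or> y).  Inverting the decomposition
  (p1,p2,p3): p2 and p3 are antisymmetric in (x,y) while p1 is symmetric, so
  f_1(a\<and>b \<otimes> x\<or>y) = (f(ax,by) + f(ay,bx))/2.\<close>
definition f1tilde ::
  "('a \<Rightarrow> 'l \<Rightarrow> 'a \<Rightarrow> 'l \<Rightarrow> 'k::field) \<Rightarrow> 'a \<Rightarrow> 'a \<Rightarrow> 'l \<Rightarrow> 'l \<Rightarrow> 'k"
  where "f1tilde F a b x y = (F a x b y + F a y b x) / 2"

text \<open>As a K-vector space, Omega^1(A) = (A \<otimes> A) / span{a \<otimes> bc - ab \<otimes> c - ac \<otimes> b},
  with a d_A(b) the class of a \<otimes> b.  Hence a K-linear map D : Omega^1(A) \<rightarrow> V is the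
  same as a bilinear map beta(a,b) = D(a d_A b) satisfying the Leibniz relation.
  Here V = 3-linear forms on k.\<close>
definition omega1_lin ::
  "('k::field \<Rightarrow> 'a::comm_ring_1 \<Rightarrow> 'a) \<Rightarrow> ('a \<Rightarrow> 'a \<Rightarrow> ('l \<Rightarrow> 'l \<Rightarrow> 'l \<Rightarrow> 'k)) \<Rightarrow> bool"
  where "omega1_lin sA \<beta> \<longleftrightarrow>
     (\<forall>b. lin_map sA fsc3 (\<lambda>a. \<beta> a b)) \<and> (\<forall>a. lin_map sA fsc3 (\<beta> a)) \<and>
     (\<forall>a b c. \<beta> a (b * c) = \<beta> (a * b) c + \<beta> (a * c) b)"

text \<open>D in Lin((Omega^1(A), d_A(A)), (Z^3(k)_Gamma, B^3(k)_Gamma)).\<close>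
definition omega1_target ::
  "('k::field \<Rightarrow> 'a::comm_ring_1 \<Rightarrow> 'a) \<Rightarrow> ('k \<Rightarrow> 'l::ab_group_add \<Rightarrow> 'l) \<Rightarrow> ('l \<Rightarrow> 'l \<Rightarrow> 'l) \<Rightarrow>
   ('a \<Rightarrow> 'a \<Rightarrow> ('l \<Rightarrow> 'l \<Rightarrow> 'l \<Rightarrow> 'k)) \<Rightarrow> bool"
  where "omega1_target sA sL br \<beta> \<longleftrightarrow> omega1_lin sA \<beta> \<and>
     (\<forall>a b. Z3_Gamma sL br (\<beta> a b)) \<and> (\<forall>b. B3_Gamma sL br (\<beta> 1 b))"

text \<open>Psi([F]) = D, where D(a d_A b) = beta a b:
  D(a d_A b - b d_A a) = Gamma(tilde f_1(a,b)) for all a, b.\<close>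
definition Psi_eq ::
  "('l \<Rightarrow> 'l \<Rightarrow> 'l) \<Rightarrow> ('a::comm_ring_1 \<Rightarrow> 'l \<Rightarrow> 'a \<Rightarrow> 'l \<Rightarrow> 'k::field) \<Rightarrow>
   ('a \<Rightarrow> 'a \<Rightarrow> ('l \<Rightarrow> 'l \<Rightarrow> 'l \<Rightarrow> 'k)) \<Rightarrow> bool"
  where "Psi_eq br F \<beta> \<longleftrightarrow> (\<forall>a b. \<beta> a b - \<beta> b a = Gamma br (f1tilde F a b))"

end

theory Submission
  imports Defs
begin

lemma lm_add: "lin_map s t f \<Longrightarrow> f (x + y) = f x + f y" unfolding lin_map_def by blast
lemma lm_scale: "lin_map s t f \<Longrightarrow> f (s c x) = t c (f x)" unfolding lin_map_def by blast
lemma lm_zero: assumes "lin_map s t f" shows "f 0 = 0"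
proof -
  have "f (0+0) = f 0 + f 0" by (rule lm_add[OF assms])
  thus ?thesis by simp
qed
lemma lm_neg: assumes "lin_map s t f" shows "f (- x) = - f x"
proof -
  have "f (x + - x) = f x + f (-x)" by (rule lm_add[OF assms])
  hence "0 = f x + f (-x)" using lm_zero[OF assms] by simp
  thus ?thesis by (metis add.commute add_eq_0_iff)
qed
lemma lm_diff: assumes "lin_map s t f" shows "f (x - y) = f x - f y"
  using lm_add[OF assms, of x "-y"] lm_neg[OF assms, of y] by simp

lemma qf:
  assumes "quadlin sA sL F"
  shows "F (a + a') x b y = F a x b y + F a' x b y"
    "F (sA c a) x b y = c * F a x b y"
    "F (- a) x b y = - F a x b y"
    "F 0 x b y = 0"
    "F a (x + x') b y = F a x b y + F a x' b y"
    "F a (sL c x) b y = c * F a x b y"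
    "F a (- x) b y = - F a x b y"
    "F a 0 b y = 0"
    "F a x (b + b') y = F a x b y + F a x b' y"
    "F a x (sA c b) y = c * F a x b y"
    "F a x (- b) y = - F a x b y"
    "F a x 0 y = 0"
    "F a x b (y + y') = F a x b y + F a x b y'"
    "F a x b (sL c y) = c * F a x b y"
    "F a x b (- y) = - F a x b y"
    "F a x b 0 = 0"
proof -
  from assms have
    q1: "lin_map sA (*) (\<lambda>a. F a x b y)" and
    q2: "lin_map sL (*) (\<lambda>x. F a x b y)" and
    q3: "lin_map sA (*) (\<lambda>b. F a x b y)" and
    q4: "lin_map sL (*) (\<lambda>y. F a x b y)" for a x b y
    unfolding quadlin_def by blast+
  show "F (a + a') x b y = F a x b y + F a' x b y" using lm_add[OF q1] by simp
  show "F (sA c a) x b y = c * F a x b y" using lm_scale[OF q1] by simp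
  show "F (- a) x b y = - F a x b y" using lm_neg[OF q1] by simp
  show "F 0 x b y = 0" using lm_zero[OF q1] by simp
  show "F a (x + x') b y = F a x b y + F a x' b y" using lm_add[OF q2] by simp
  show "F a (sL c x) b y = c * F a x b y" using lm_scale[OF q2] by simp
  show "F a (- x) b y = - F a x b y" using lm_neg[OF q2] by simp
  show "F a 0 b y = 0" using lm_zero[OF q2] by simp
  show "F a x (b + b') y = F a x b y + F a x b' y" using lm_add[OF q3] by simp
  show "F a x (sA c b) y = c * F a x b y" using lm_scale[OF q3] by simp
  show "F a x (- b) y = - F a x b y" using lm_neg[OF q3] by simp
  show "F a x 0 y = 0" using lm_zero[OF q3] by simp
  show "F a x b (y + y') = F a x b y + F a x b y'" using lm_add[OF q4] by simp
  show "F a x b (sL c y) = c * F a x b y" using lm_scale[OF q4] by simp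
  show "F a x b (- y) = - F a x b y" using lm_neg[OF q4] by simp
  show "F a x b 0 = 0" using lm_zero[OF q4] by simp
qed

lemma bf:
  assumes "bilin s1 s2 B"
  shows "B (x + x') y = B x y + B x' y"
    "B (s1 c x) y = c * B x y"
    "B (- x) y = - B x y"
    "B 0 y = 0"
    "B x (y + y') = B x y + B x y'"
    "B x (s2 c y) = c * B x y"
    "B x (- y) = - B x y"
    "B x 0 = 0"
proof -
  from assms have
    q1: "lin_map s1 (*) (\<lambda>x. B x y)" and
    q2: "lin_map s2 (*) (B x)" for x y
    unfolding bilin_def by blast+
  show "B (x + x') y = B x y + B x' y" using lm_add[OF q1] by simp
  show "B (s1 c x) y = c * B x y" using lm_scale[OF q1] by simp
  show "B (- x) y = - B x y" using lm_neg[OF q1] by simp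
  show "B 0 y = 0" using lm_zero[OF q1] by simp
  show "B x (y + y') = B x y + B x y'" using lm_add[OF q2] by simp
  show "B x (s2 c y) = c * B x y" using lm_scale[OF q2] by simp
  show "B x (- y) = - B x y" using lm_neg[OF q2] by simp
  show "B x 0 = 0" using lm_zero[OF q2] by simp
qed

lemma alt2_antisym: assumes "alt2 s \<eta>" shows "\<eta> y x = - \<eta> x y"
proof -
  have b: "bilin s s \<eta>" and z: "\<And>x. \<eta> x x = 0" using assms unfolding alt2_def by auto
  have "\<eta> (x + y) (x + y) = \<eta> x x + \<eta> x y + (\<eta> y x + \<eta> y y)"
    by (simp add: bf(1,5)[OF b])
  thus ?thesis by (simp add: z eq_neg_iff_add_eq_0 add.commute)
qed

lemma lie:
  assumes "lie_algebra sL br"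
  shows "br (x + x') y = br x y + br x' y"
    "br (sL c x) y = sL c (br x y)"
    "br x (y + y') = br x y + br x y'"
    "br x (sL c y) = sL c (br x y)"
    "br x x = 0"
    "br y x = - br x y"
    "br (- x) y = - br x y"
    "br x (- y) = - br x y"
    "vector_space sL"
proof -
  from assms have
    q1: "lin_map sL sL (\<lambda>x. br x y)" and
    q2: "lin_map sL sL (br x)" and z: "\<And>x. br x x = 0" and vs: "vector_space sL" for x y
    unfolding lie_algebra_def by blast+
  show "br (x + x') y = br x y + br x' y" using lm_add[OF q1] by simp
  show "br (sL c x) y = sL c (br x y)" using lm_scale[OF q1] by simp
  show "br x (y + y') = br x y + br x y'" using lm_add[OF q2] by simp
  show "br x (sL c y) = sL c (br x y)" using lm_scale[OF q2] by simp
  show "br x x = 0" by (rule z)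
  show "br (- x) y = - br x y" using lm_neg[OF q1] by simp
  show "br x (- y) = - br x y" using lm_neg[OF q2] by simp
  show "vector_space sL" by (rule vs)
  have "br (x + y) (x + y) = br x x + br x y + (br y x + br y y)"
    using lm_add[OF q1] lm_add[OF q2] by simp
  thus "br y x = - br x y" by (simp add: z eq_neg_iff_add_eq_0 add.commute)
qed

lemma vs_fsc2: "vector_space (fsc2 :: 'k::field \<Rightarrow> ('x \<Rightarrow> 'y \<Rightarrow> 'k) \<Rightarrow> _)"
  by unfold_locales (auto simp: fsc2_def fun_eq_iff algebra_simps)
lemma vs_fsc3: "vector_space (fsc3 :: 'k::field \<Rightarrow> ('x \<Rightarrow> 'y \<Rightarrow> 'z \<Rightarrow> 'k) \<Rightarrow> _)"
  by unfold_locales (auto simp: fsc3_def fun_eq_iff algebra_simps)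


lemma two_cancel: assumes "(2::'k::field) \<noteq> 0" "w + w = (0::'k)" shows "w = 0"
proof -
  have "2 * w = 0" using assms(2) by (metis mult_2)
  thus ?thesis using assms(1) by (metis mult_eq_0_iff)
qed

lemma derived_base: assumes "lie_algebra sL br" shows "br x y \<in> derived sL br"
proof -
  have "module sL" using lie(9)[OF assms] by (simp add: module_iff_vector_space)
  thus ?thesis unfolding derived_def by (rule module.span_base) blast
qed

lemma part2_back:
  fixes sA :: "'k::field \<Rightarrow> 'a::comm_ring_1 \<Rightarrow> 'a"
    and sL :: "'k \<Rightarrow> 'l::ab_group_add \<Rightarrow> 'l"
    and br :: "'l \<Rightarrow> 'l \<Rightarrow> 'l"
  assumes k: "lie_algebra sL br"
    and W: "alt13 sA sL br W" and ph: "H2_lift sA sL br \<phi>"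
    and B: "g_B2 sA sL br (\<lambda>a x b y. F a x b y - Phi_rep W \<phi> a x b y)"
  shows "Psi_eq br F (\<lambda>a b. (\<lambda>x y z. 0))"
proof -
  obtain l where l: "bilin sA sL l" and eq: "\<And>a x b y. F a x b y - (W a x b y + \<phi> (a * b) x y) = - l (a * b) (br x y)"
    using B unfolding g_B2_def Phi_rep_def by blast
  have Wd: "\<And>a x b y. x \<in> derived sL br \<Longrightarrow> W a x b y = 0" using W unfolding alt13_def by blast
  have Wa: "\<And>a x b y. W a x b y = - W b y a x" using W unfolding alt13_def g_alt2_def by blast
  have pa: "\<phi> c y x = - \<phi> c x y" for c x y
    using ph unfolding H2_lift_def Z2_def by (blast intro: alt2_antisym)
  have "F a (br x y) b z + F a z b (br x y) = 0" for a b x y z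
  proof -
    have w1: "W a (br x y) b z = 0" by (rule Wd[OF derived_base[OF k]])
    have w2: "W a z b (br x y) = 0" using Wa[of a z b "br x y"] Wd[OF derived_base[OF k], of b x y a z] by simp
    have l2: "l (a*b) (br z (br x y)) = - l (a*b) (br (br x y) z)"
      using lie(6)[OF k, of z "br x y"] bf(7)[OF l] by simp
    have e1: "F a (br x y) b z = \<phi> (a*b) (br x y) z - l (a * b) (br (br x y) z)"
      using eq[of a "br x y" b z] w1 by (simp add: algebra_simps)
    have e2: "F a z b (br x y) = - \<phi> (a*b) (br x y) z + l (a * b) (br (br x y) z)"
      using eq[of a z b "br x y"] w2 l2 pa[of "a*b" "br x y" z] by (simp add: algebra_simps)
    show ?thesis using e1 e2 by simp
  qed
  thus ?thesis unfolding Psi_eq_def Gamma_def f1tilde_def by (simp add: fun_eq_iff)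
qed


lemma part1:
  fixes sA :: "'k::field \<Rightarrow> 'a::comm_ring_1 \<Rightarrow> 'a"
    and sL :: "'k \<Rightarrow> 'l::ab_group_add \<Rightarrow> 'l"
    and br :: "'l \<Rightarrow> 'l \<Rightarrow> 'l"
  assumes two: "(2::'k) \<noteq> 0"
    and W: "alt13 sA sL br W" and ph: "H2_lift sA sL br \<phi>" and B: "g_B2 sA sL br (Phi_rep W \<phi>)"
  shows "W = (\<lambda>a x b y. 0) \<and> (\<forall>a. B2 sL br (\<phi> a))"
proof -
  obtain l where l: "bilin sA sL l" and eq: "\<And>a x b y. W a x b y + \<phi> (a * b) x y = - l (a * b) (br x y)"
    using B unfolding g_B2_def Phi_rep_def by blast
  have w13: "\<And>a x y. W a x 1 y + W 1 x a y = 0" using W unfolding alt13_def by blast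
  have h: "W a x 1 y = 0" for a x y
  proof -
    have "W a x 1 y = W 1 x a y" using eq[of a x 1 y] eq[of 1 x a y]
      by (metis add_right_cancel mult_1_left mult_1_right)
    hence "W a x 1 y + W a x 1 y = 0" using w13[of a x y] by simp
    thus ?thesis by (rule two_cancel[OF two])
  qed
  have W0: "W a x b y = 0" for a x b y
    using eq[of a x b y] eq[of "a*b" x 1 y] h[of "a*b" x y] by simp
  have "B2 sL br (\<phi> a)" for a
    unfolding B2_def
  proof (intro exI conjI)
    show "lin_map sL (*) (l a)" using l unfolding bilin_def by blast
    show "\<phi> a = (\<lambda>x y. - l a (br x y))" using eq[of a _ 1 _] h[of a] by (auto simp: fun_eq_iff)
  qed
  thus ?thesis using W0 by (auto simp: fun_eq_iff)
qed


lemma Acomm: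
  assumes "comm_algebra sA"
  shows "sA c a * b = sA c (a * b)" "a * sA c b = sA c (a * b)"
proof -
  have h: "\<And>c a b. sA c (a * b) = sA c a * b" using assms unfolding comm_algebra_def by blast
  show "sA c a * b = sA c (a * b)" using h by simp
  show "a * sA c b = sA c (a * b)" using h[of c b a] by (simp add: mult.commute)
qed

lemma part2_fwd:
  fixes sA :: "'k::field \<Rightarrow> 'a::comm_ring_1 \<Rightarrow> 'a"
    and sL :: "'k \<Rightarrow> 'l::ab_group_add \<Rightarrow> 'l"
    and br :: "'l \<Rightarrow> 'l \<Rightarrow> 'l"
  assumes two: "(2::'k) \<noteq> 0"
    and A: "comm_algebra sA"
    and k: "lie_algebra sL br"
    and Fz: "g_Z2 sA sL br F" and Ps: "Psi_eq br F (\<lambda>a b. (\<lambda>x y z. 0))"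
  shows "\<exists>W \<phi>. alt13 sA sL br W \<and> H2_lift sA sL br \<phi> \<and>
                 g_B2 sA sL br (\<lambda>a x b y. F a x b y - Phi_rep W \<phi> a x b y)"
proof -
  have Fq: "quadlin sA sL F" and Fa: "\<And>a x b y. F a x b y = - F b y a x"
    and Fc: "\<And>a x b y c z. F (a * b) (br x y) c z + F (b * c) (br y z) a x + F (c * a) (br z x) b y = 0"
    using Fz unfolding g_Z2_def g_alt2_def by blast+
  have S: "F a z b (br x y) = - F a (br x y) b z" for a b x y z
  proof -
    have "Gamma br (f1tilde F a b) x y z = 0"
      using Ps unfolding Psi_eq_def by (metis diff_self zero_fun_apply)
    hence "(F a (br x y) b z + F a z b (br x y)) / 2 = 0" unfolding Gamma_def f1tilde_def by simp
    hence "F a (br x y) b z + F a z b (br x y) = 0" using two by simp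
    thus ?thesis by (metis add.commute add_eq_0_iff)
  qed
  have Pc: "F c (br x y) 1 z + F c (br y z) 1 x + F c (br z x) 1 y = 0" for c x y z
    using Fc[of c 1 x y 1 z] Fa[of 1 "br y z" c x] S[of c x 1 y z] by simp
  have GP: "F a (br u v) b w = F (a * b) (br u v) 1 w" for a b u v w
  proof -
    define G where "G x y z = F a (br x y) b z" for x y z
    define P where "P x y z = F (a * b) (br x y) 1 z" for x y z
    have C1: "P x y z + G y z x + G z x y = 0" for x y z
      using Fc[of a b x y 1 z] Fa[of b "br y z" a x] S[of a x b y z] by (simp add: G_def P_def)
    have PC: "P x y z + P y z x + P z x y = 0" for x y z
      unfolding P_def by (rule Pc)
    have "(G u v w + G v w u + G w u v) + (G u v w + G v w u + G w u v) = 0"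
      using C1[of u v w] C1[of v w u] C1[of w u v] PC[of u v w] by algebra
    hence "G u v w + G v w u + G w u v = 0" by (rule two_cancel[OF two])
    hence "P u v w = G u v w" using C1[of u v w] by algebra
    thus ?thesis by (simp add: G_def P_def)
  qed
  define ph where "ph = (\<lambda>c x y. (F c x 1 y - F c y 1 x) / (2::'k))"
  define W where "W = (\<lambda>a x b y. F a x b y - ph (a * b) x y)"
  have phb: "ph c (br u v) w = F c (br u v) 1 w" for c u v w
  proof -
    have e: "F c w 1 (br u v) = - F c (br u v) 1 w" by (rule S)
    show ?thesis unfolding ph_def e diff_minus_eq_add minus_minus mult_2[symmetric] using two by simp
  qed
  note q = qf[OF Fq]
  have Wq: "quadlin sA sL W"
    unfolding quadlin_def lin_map_def W_def ph_def
    by (simp add: q Acomm[OF A] ring_distribs algebra_simps diff_divide_distrib add_divide_distrib)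
  have pha: "ph c y x = - ph c x y" for c x y
    by (simp add: ph_def minus_divide_left)
  have ph2: "2 * ph c x y = F c x 1 y - F c y 1 x" for c x y
    using two by (simp add: ph_def)
  have ms: "module sL" using lie(9)[OF k] by (simp add: module_iff_vector_space)
  have W13: "alt13 sA sL br W"
    unfolding alt13_def g_alt2_def
  proof (intro conjI allI impI)
    show "quadlin sA sL W" by (rule Wq)
    show "W a x b y = - W b y a x" for a x b y
      unfolding W_def using Fa[of a x b y] pha[of "a*b" y x] by (simp add: mult.commute[of b a])
    show "W a x b y = 0" if xin: "x \<in> derived sL br" for a x b y
      using xin unfolding derived_def
    proof (rule module.span_induct_alt[OF ms, where h="\<lambda>x. W a x b y = 0"])
      show "W a 0 b y = 0" by (simp add: qf[OF Wq])
      fix c x' y' assume x': "x' \<in> {br x y |x y. True}" and y': "W a y' b y = 0"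
      then obtain u v where xe: "x' = br u v" by blast
      have "W a (br u v) b y = 0" unfolding W_def using GP phb by simp
      thus "W a (sL c x' + y') b y = 0" using y' xe by (simp add: qf[OF Wq])
    qed
    show "W a x 1 y + W 1 x a y = 0" for a x y
    proof -
      have e1: "W a x 1 y + W 1 x a y = F a x 1 y + F 1 x a y - (ph a x y + ph a x y)"
        by (simp add: W_def algebra_simps)
      have e2: "ph a x y + ph a x y = F a x 1 y - F a y 1 x" using ph2[of a x y] by (simp only: mult_2)
      show ?thesis unfolding e1 e2 Fa[of 1 x a y] by simp
    qed
  qed
  have phL: "H2_lift sA sL br ph"
    unfolding H2_lift_def
  proof (intro conjI allI)
    show "lin_map sA fsc2 ph"
      unfolding lin_map_def fsc2_def ph_def
      by (simp add: q fun_eq_iff algebra_simps diff_divide_distrib add_divide_distrib)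
    fix a
    have bl: "bilin sL sL (ph a)"
      unfolding bilin_def lin_map_def ph_def
      by (simp add: q algebra_simps diff_divide_distrib add_divide_distrib)
    have d: "d2 br (ph a) x y z = 0" for x y z
    proof -
      have e: "F a (br x z) 1 y = - F a (br z x) 1 y" using lie(6)[OF k, of x z] by (simp add: q)
      show ?thesis unfolding d2_def phb e using Pc[of a x y z] by algebra
    qed
    show "Z2 sL br (ph a)" unfolding Z2_def alt2_def
      using bl d by (auto simp: fun_eq_iff ph_def)
  qed
  have "g_B2 sA sL br (\<lambda>a x b y. F a x b y - Phi_rep W ph a x b y)"
    unfolding g_B2_def
  proof (intro exI conjI allI)
    show "bilin sA sL (\<lambda>_ _. 0)" unfolding bilin_def lin_map_def by simp
    show "F a x b y - Phi_rep W ph a x b y = - (0::'k)" for a x b y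
      unfolding Phi_rep_def W_def by simp
  qed
  thus ?thesis using W13 phL by blast
qed


lemma bilin_add:
  fixes s1 :: "'k::field \<Rightarrow> 'u::ab_group_add \<Rightarrow> 'u" and s2 :: "'k \<Rightarrow> 'v::ab_group_add \<Rightarrow> 'v"
    and B1 B2 :: "'u \<Rightarrow> 'v \<Rightarrow> 'k"
  assumes "bilin s1 s2 B1" "bilin s1 s2 B2" shows "bilin s1 s2 (B1 + B2)"
  unfolding bilin_def lin_map_def by (simp add: bf[OF assms(1)] bf[OF assms(2)] algebra_simps)
lemma bilin_scale:
  fixes s1 :: "'k::field \<Rightarrow> 'u::ab_group_add \<Rightarrow> 'u" and s2 :: "'k \<Rightarrow> 'v::ab_group_add \<Rightarrow> 'v"
    and B :: "'u \<Rightarrow> 'v \<Rightarrow> 'k"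
  assumes "bilin s1 s2 B" shows "bilin s1 s2 (fsc2 c B)"
  unfolding bilin_def lin_map_def fsc2_def by (simp add: bf[OF assms] algebra_simps)
lemma bilin_zero: "bilin (s1 :: 'k::field \<Rightarrow> 'u::ab_group_add \<Rightarrow> 'u) (s2 :: 'k \<Rightarrow> 'v::ab_group_add \<Rightarrow> 'v) 0"
  unfolding bilin_def lin_map_def by simp

lemma sub_inv_sym: "module.subspace fsc2 {\<kappa>. inv_sym sL br \<kappa>}"
proof -
  have m: "module (fsc2 :: 'k::field \<Rightarrow> ('l \<Rightarrow> 'l \<Rightarrow> 'k) \<Rightarrow> _)"
    using vs_fsc2 by (simp add: module_iff_vector_space)
  show ?thesis
  proof (rule module.subspaceI[OF m], simp_all)
    show "inv_sym sL br 0" unfolding inv_sym_def by (simp add: bilin_zero)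
    show "inv_sym sL br (x + y)" if "inv_sym sL br x" "inv_sym sL br y" for x y
      using that unfolding inv_sym_def by (auto intro!: bilin_add)
    show "inv_sym sL br (fsc2 c x)" if "inv_sym sL br x" for c x
      using that unfolding inv_sym_def by (auto intro!: bilin_scale[unfolded fsc2_def] simp: fsc2_def)
  qed
qed

lemma sub_alt2: "module.subspace fsc2 {\<eta>. alt2 sL \<eta>}"
proof -
  have m: "module (fsc2 :: 'k::field \<Rightarrow> ('l \<Rightarrow> 'l \<Rightarrow> 'k) \<Rightarrow> _)"
    using vs_fsc2 by (simp add: module_iff_vector_space)
  show ?thesis
  proof (rule module.subspaceI[OF m], simp_all)
    show "alt2 sL 0" unfolding alt2_def by (simp add: bilin_zero)
    show "alt2 sL (x + y)" if "alt2 sL x" "alt2 sL y" for x y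
      using that unfolding alt2_def by (auto intro!: bilin_add)
    show "alt2 sL (fsc2 c x)" if "alt2 sL x" for c x
      using that unfolding alt2_def by (auto intro!: bilin_scale[unfolded fsc2_def] simp: fsc2_def)
  qed
qed

lemma hom_Gamma: "module_hom fsc2 fsc3 (Gamma br :: ('l \<Rightarrow> 'l \<Rightarrow> 'k::field) \<Rightarrow> _)"
proof (rule module_hom.intro)
  show "module (fsc2 :: 'k::field \<Rightarrow> ('l \<Rightarrow> 'l \<Rightarrow> 'k) \<Rightarrow> _)"
    using vs_fsc2 by (simp add: module_iff_vector_space)
  show "module (fsc3 :: 'k::field \<Rightarrow> ('l \<Rightarrow> 'l \<Rightarrow> 'l \<Rightarrow> 'k) \<Rightarrow> _)"
    using vs_fsc3 by (simp add: module_iff_vector_space)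
  show "module_hom_axioms fsc2 fsc3 (Gamma br)"
    by unfold_locales (auto simp: Gamma_def fsc2_def fsc3_def fun_eq_iff)
qed

lemma hom_d2: "module_hom fsc2 fsc3 (d2 br :: ('l \<Rightarrow> 'l \<Rightarrow> 'k::field) \<Rightarrow> _)"
proof (rule module_hom.intro)
  show "module (fsc2 :: 'k::field \<Rightarrow> ('l \<Rightarrow> 'l \<Rightarrow> 'k) \<Rightarrow> _)"
    using vs_fsc2 by (simp add: module_iff_vector_space)
  show "module (fsc3 :: 'k::field \<Rightarrow> ('l \<Rightarrow> 'l \<Rightarrow> 'l \<Rightarrow> 'k) \<Rightarrow> _)"
    using vs_fsc3 by (simp add: module_iff_vector_space)
  show "module_hom_axioms fsc2 fsc3 (d2 br)"
    by unfold_locales (auto simp: d2_def fsc2_def fsc3_def fun_eq_iff algebra_simps)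
qed

lemma lin_section:
  fixes s1 :: "'k::field \<Rightarrow> 'b::ab_group_add \<Rightarrow> 'b" and s2 :: "'k \<Rightarrow> 'c::ab_group_add \<Rightarrow> 'c"
  assumes "vector_space s1" "vector_space s2" "module_hom s1 s2 f" "module.subspace s1 V"
  shows "\<exists>g. (\<forall>v. g v \<in> V) \<and> module_hom s2 s1 g \<and> (\<forall>v\<in>f ` V. f (g v) = v)"
proof -
  interpret vector_space_pair s1 s2 using assms(1,2) by (simp add: vector_space_pair_def)
  have "Vector_Spaces.linear s1 s2 f" using assms(3) by (simp add: module_hom_iff_linear)
  from linear_exists_right_inverse_on[OF this assms(4)] obtain g where
    "g ` UNIV \<subseteq> V" "Vector_Spaces.linear s2 s1 g" "\<forall>v\<in>f ` V. f (g v) = v" by blast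
  thus ?thesis by (intro exI[of _ g]) (auto simp: module_hom_iff_linear)
qed


lemma part3:
  fixes sA :: "'k::field \<Rightarrow> 'a::comm_ring_1 \<Rightarrow> 'a"
    and sL :: "'k \<Rightarrow> 'l::ab_group_add \<Rightarrow> 'l"
    and br :: "'l \<Rightarrow> 'l \<Rightarrow> 'l"
    and \<beta> :: "'a \<Rightarrow> 'a \<Rightarrow> ('l \<Rightarrow> 'l \<Rightarrow> 'l \<Rightarrow> 'k)"
  assumes two: "(2::'k) \<noteq> 0"
    and A: "comm_algebra sA"
    and k: "lie_algebra sL br"
    and bt: "omega1_target sA sL br \<beta>"
  shows "\<exists>F. g_Z2 sA sL br F \<and> Psi_eq br F \<beta>"
proof -
  have bl1: "\<And>b. lin_map sA fsc3 (\<lambda>a. \<beta> a b)" and bl2: "\<And>a. lin_map sA fsc3 (\<beta> a)"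
    and leib: "\<And>a b c. \<beta> a (b * c) = \<beta> (a * b) c + \<beta> (a * c) b"
    and bz: "\<And>a b. Z3_Gamma sL br (\<beta> a b)" and bb: "\<And>b. B3_Gamma sL br (\<beta> 1 b)"
    using bt unfolding omega1_target_def omega1_lin_def by blast+
  have vs2: "vector_space (fsc2 :: 'k \<Rightarrow> ('l \<Rightarrow> 'l \<Rightarrow> 'k) \<Rightarrow> _)" by (rule vs_fsc2)
  have vs3: "vector_space (fsc3 :: 'k \<Rightarrow> ('l \<Rightarrow> 'l \<Rightarrow> 'l \<Rightarrow> 'k) \<Rightarrow> _)" by (rule vs_fsc3)
  have m2: "module (fsc2 :: 'k \<Rightarrow> ('l \<Rightarrow> 'l \<Rightarrow> 'k) \<Rightarrow> _)" using vs2 by (simp add: module_iff_vector_space)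
  have hG: "module_hom fsc2 fsc3 (Gamma br :: ('l \<Rightarrow> 'l \<Rightarrow> 'k) \<Rightarrow> _)" by (rule hom_Gamma)
  have hd: "module_hom fsc2 fsc3 (d2 br :: ('l \<Rightarrow> 'l \<Rightarrow> 'k) \<Rightarrow> _)" by (rule hom_d2)
  obtain g1 :: "('l \<Rightarrow> 'l \<Rightarrow> 'l \<Rightarrow> 'k) \<Rightarrow> ('l \<Rightarrow> 'l \<Rightarrow> 'k)" where
    g1V: "\<And>v. inv_sym sL br (g1 v)" and g1h: "module_hom fsc3 fsc2 g1"
    and g1s: "\<And>v. v \<in> Gamma br ` {\<kappa>. inv_sym sL br \<kappa>} \<Longrightarrow> Gamma br (g1 v) = v"
    using lin_section[OF vs2 vs3 hG sub_inv_sym[of sL br]] by blast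
  obtain g2 :: "('l \<Rightarrow> 'l \<Rightarrow> 'l \<Rightarrow> 'k) \<Rightarrow> ('l \<Rightarrow> 'l \<Rightarrow> 'k)" where
    g2V: "\<And>v. alt2 sL (g2 v)" and g2h: "module_hom fsc3 fsc2 g2"
    and g2s: "\<And>v. v \<in> d2 br ` {\<eta>. alt2 sL \<eta>} \<Longrightarrow> d2 br (g2 v) = v"
    using lin_section[OF vs2 vs3 hd sub_alt2[of sL]] by blast
  have K2: "Gamma br (g1 (\<beta> a b - \<beta> b a)) = \<beta> a b - \<beta> b a" for a b
  proof -
    obtain k1 where k1: "inv_sym sL br k1" "\<beta> a b = Gamma br k1" using bz[of a b] unfolding Z3_Gamma_def by blast
    obtain k2 where k2: "inv_sym sL br k2" "\<beta> b a = Gamma br k2" using bz[of b a] unfolding Z3_Gamma_def by blast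
    have "\<beta> a b - \<beta> b a = Gamma br (k1 - k2)" using module_hom.diff[OF hG] k1 k2 by simp
    moreover have "inv_sym sL br (k1 - k2)" using module.subspace_diff[OF m2 sub_inv_sym] k1 k2 by simp
    ultimately have "\<beta> a b - \<beta> b a \<in> Gamma br ` {\<kappa>. inv_sym sL br \<kappa>}" by blast
    thus ?thesis by (rule g1s)
  qed
  have E2: "d2 br (g2 (- \<beta> 1 c)) = - \<beta> 1 c" for c
  proof -
    obtain e where e: "alt2 sL e" "\<beta> 1 c = d2 br e" using bb[of c] unfolding B3_Gamma_def B3_def by blast
    have "- \<beta> 1 c = d2 br (- e)" using module_hom.neg[OF hd] e by simp
    moreover have "alt2 sL (- e)" using module.subspace_neg[OF m2 sub_alt2] e by simp
    ultimately have "- \<beta> 1 c \<in> d2 br ` {\<eta>. alt2 sL \<eta>}" by blast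
    thus ?thesis by (rule g2s)
  qed
  define \<kappa> where "\<kappa> a b = g1 (\<beta> a b - \<beta> b a)" for a b
  define \<eta> where "\<eta> c = g2 (- \<beta> 1 c)" for c
  define F where "F a x b y = \<kappa> a b x y + \<eta> (a * b) x y" for a x b y
  have \<kappa>s: "inv_sym sL br (\<kappa> a b)" for a b unfolding \<kappa>_def by (rule g1V)
  have \<kappa>b: "bilin sL sL (\<kappa> a b)" for a b using \<kappa>s unfolding inv_sym_def by blast
  have \<kappa>sym: "\<kappa> a b y x = \<kappa> a b x y" for a b x y using \<kappa>s unfolding inv_sym_def by blast
  have \<kappa>inv: "\<kappa> a b (br x y) z = \<kappa> a b x (br y z)" for a b x y z using \<kappa>s unfolding inv_sym_def by blast
  have \<kappa>cyc: "\<kappa> a b (br y z) x = \<kappa> a b (br x y) z" for a b x y z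
    using \<kappa>sym[of a b x "br y z"] \<kappa>inv[of a b x y z] by simp
  have \<eta>a: "alt2 sL (\<eta> c)" for c unfolding \<eta>_def by (rule g2V)
  have \<eta>b: "bilin sL sL (\<eta> c)" for c using \<eta>a unfolding alt2_def by blast
  have \<eta>anti: "\<eta> c y x = - \<eta> c x y" for c x y using \<eta>a by (rule alt2_antisym)
  have \<kappa>G: "\<kappa> a b (br x y) z = \<beta> a b x y z - \<beta> b a x y z" for a b x y z
    using fun_cong[OF fun_cong[OF fun_cong[OF K2[of a b]]], of x y z] unfolding \<kappa>_def Gamma_def by simp
  have \<eta>d: "d2 br (\<eta> c) x y z = - \<beta> 1 c x y z" for c x y z
    using E2[of c] unfolding \<eta>_def by simp
  have \<kappa>add: "\<kappa> (a + a') b = \<kappa> a b + \<kappa> a' b" for a a' b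
  proof -
    have "\<beta> (a + a') b - \<beta> b (a + a') = (\<beta> a b - \<beta> b a) + (\<beta> a' b - \<beta> b a')"
      using lm_add[OF bl1, of a a' b] lm_add[OF bl2, of b a a'] by (simp add: algebra_simps)
    thus ?thesis unfolding \<kappa>_def using module_hom.add[OF g1h] by simp
  qed
  have \<kappa>scale: "\<kappa> (sA c a) b = fsc2 c (\<kappa> a b)" for c a b
  proof -
    have "\<beta> (sA c a) b - \<beta> b (sA c a) = fsc3 c (\<beta> a b - \<beta> b a)"
      using lm_scale[OF bl1, of c a b] lm_scale[OF bl2, of b c a] by (simp add: fsc3_def fun_eq_iff algebra_simps)
    thus ?thesis unfolding \<kappa>_def using module_hom.scale[OF g1h] by simp
  qed
  have \<kappa>anti: "\<kappa> b a = - \<kappa> a b" for a b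
  proof -
    have "g1 (\<beta> b a - \<beta> a b) = g1 (- (\<beta> a b - \<beta> b a))" by simp
    also have "\<dots> = - g1 (\<beta> a b - \<beta> b a)" by (rule module_hom.neg[OF g1h])
    finally show ?thesis unfolding \<kappa>_def .
  qed
  have \<kappa>add2: "\<kappa> a (b + b') = \<kappa> a b + \<kappa> a b'" for a b b'
    using \<kappa>anti[of a "b + b'"] \<kappa>add[of b b' a] \<kappa>anti[of b a] \<kappa>anti[of b' a] by simp
  have \<kappa>scale2: "\<kappa> a (sA c b) = fsc2 c (\<kappa> a b)" for c a b
    using \<kappa>anti[of a "sA c b"] \<kappa>scale[of c b a] \<kappa>anti[of b a] by (simp add: fsc2_def fun_eq_iff)
  have \<eta>add: "\<eta> (u + v) = \<eta> u + \<eta> v" for u v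
  proof -
    have "g2 (- \<beta> 1 (u + v)) = g2 (- \<beta> 1 u + - \<beta> 1 v)" using lm_add[OF bl2, of 1 u v] by simp
    also have "\<dots> = g2 (- \<beta> 1 u) + g2 (- \<beta> 1 v)" by (rule module_hom.add[OF g2h])
    finally show ?thesis unfolding \<eta>_def .
  qed
  have \<eta>scale: "\<eta> (sA c u) = fsc2 c (\<eta> u)" for c u
  proof -
    have "- \<beta> 1 (sA c u) = fsc3 c (- \<beta> 1 u)" using lm_scale[OF bl2, of 1 c u] by (simp add: fsc3_def fun_eq_iff)
    thus ?thesis unfolding \<eta>_def using module_hom.scale[OF g2h] by simp
  qed
  note kb = bf[OF \<kappa>b] and eb = bf[OF \<eta>b]
  have Fq: "quadlin sA sL F"
    unfolding quadlin_def lin_map_def F_def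
    by (simp add: \<kappa>add \<kappa>scale \<kappa>add2 \<kappa>scale2 \<eta>add \<eta>scale Acomm[OF A] kb eb ring_distribs fsc2_def algebra_simps)
  have Fa: "F a x b y = - F b y a x" for a x b y
    unfolding F_def using \<kappa>anti[of b a] \<eta>anti[of "a*b" y x] \<kappa>sym[of a b x y] by (simp add: mult.commute[of b a])
  have Fc: "F (a * b) (br x y) c z + F (b * c) (br y z) a x + F (c * a) (br z x) b y = 0" for a x b y c z
  proof -
    define m where "m = a * b * c"
    have m1: "a * b * c = m" "b * c * a = m" "c * a * b = m" by (simp_all add: m_def ac_simps)
    have k1: "\<kappa> (a*b) c (br x y) z = \<beta> (a*b) c x y z - \<beta> c (a*b) x y z" by (rule \<kappa>G)
    have k2: "\<kappa> (b*c) a (br y z) x = \<beta> (b*c) a x y z - \<beta> a (b*c) x y z"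
      using \<kappa>cyc[of "b*c" a y z x] \<kappa>G[of "b*c" a x y z] by simp
    have k3: "\<kappa> (c*a) b (br z x) y = \<beta> (c*a) b x y z - \<beta> b (c*a) x y z"
      using \<kappa>cyc[of "c*a" b z x y] \<kappa>cyc[of "c*a" b y z x] \<kappa>G[of "c*a" b x y z] by simp
    have e3: "\<eta> m (br z x) y = - \<eta> m (br x z) y"
      using lie(6)[OF k, of z x] eb(3) by simp
    have h: "\<eta> m (br x y) z + \<eta> m (br y z) x + \<eta> m (br z x) y = \<beta> 1 m x y z"
      using \<eta>d[of m x y z] e3 unfolding d2_def by algebra
    have L0: "\<beta> 1 m x y z = \<beta> (a*b) c x y z + \<beta> c (a*b) x y z"
      using leib[of 1 "a*b" c] unfolding m_def by simp
    have L1: "\<beta> c (a*b) x y z = \<beta> (c*a) b x y z + \<beta> (b*c) a x y z"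
      using leib[of c a b] by (simp add: mult.commute[of c b])
    have L2: "\<beta> a (b*c) x y z = \<beta> (a*b) c x y z + \<beta> (c*a) b x y z"
      using leib[of a b c] by (simp add: mult.commute[of a c])
    have L3: "\<beta> b (c*a) x y z = \<beta> (b*c) a x y z + \<beta> (a*b) c x y z"
      using leib[of b c a] by (simp add: mult.commute[of b a])
    show ?thesis unfolding F_def m1 using k1 k2 k3 h L0 L1 L2 L3 by algebra
  qed
  have Psi: "Psi_eq br F \<beta>"
    unfolding Psi_eq_def
  proof (intro allI ext)
    fix a b x y z
    have e: "F a z b (br x y) = \<kappa> a b (br x y) z - \<eta> (a*b) (br x y) z"
      unfolding F_def using \<kappa>sym[of a b z "br x y"] \<eta>anti[of "a*b" z "br x y"] by simp
    have e1: "F a (br x y) b z = \<kappa> a b (br x y) z + \<eta> (a*b) (br x y) z"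
      unfolding F_def by simp
    have s: "F a (br x y) b z + F a z b (br x y) = \<kappa> a b (br x y) z + \<kappa> a b (br x y) z"
      unfolding e e1 by simp
    have hf: "(u + u) / 2 = u" for u :: 'k
    proof -
      have "u + u = 2 * u" by (simp only: mult_2)
      thus ?thesis using two by simp
    qed
    have "Gamma br (f1tilde F a b) x y z = \<kappa> a b (br x y) z"
      unfolding Gamma_def f1tilde_def s hf ..
    thus "(\<beta> a b - \<beta> b a) x y z = Gamma br (f1tilde F a b) x y z" using \<kappa>G by simp
  qed
  show ?thesis unfolding g_Z2_def g_alt2_def using Fq Fa Fc Psi by blast
qed


theorem theorem4p2:
  fixes sA :: "'k::field \<Rightarrow> 'a::comm_ring_1 \<Rightarrow> 'a"
    and sL :: "'k \<Rightarrow> 'l::ab_group_add \<Rightarrow> 'l"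
    and br :: "'l \<Rightarrow> 'l \<Rightarrow> 'l"
  assumes two: "(2::'k) \<noteq> 0"
    and A: "comm_algebra sA"
    and k: "lie_algebra sL br"
  shows
    \<comment> \<open>exactness at the left term: Phi is injective\<close>
    "(\<forall>W \<phi>. alt13 sA sL br W \<and> H2_lift sA sL br \<phi> \<and> g_B2 sA sL br (Phi_rep W \<phi>) \<longrightarrow>
        W = (\<lambda>a x b y. 0) \<and> (\<forall>a. B2 sL br (\<phi> a)))
     \<and>
     \<comment> \<open>exactness in the middle: ker Psi = im Phi\<close>
     (\<forall>F. g_Z2 sA sL br F \<longrightarrow>
        (Psi_eq br F (\<lambda>a b. (\<lambda>x y z. 0)) \<longleftrightarrow>
         (\<exists>W \<phi>. alt13 sA sL br W \<and> H2_lift sA sL br \<phi> \<and>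
                 g_B2 sA sL br (\<lambda>a x b y. F a x b y - Phi_rep W \<phi> a x b y))))
     \<and>
     \<comment> \<open>exactness at the right term: Psi is surjective\<close>
     (\<forall>\<beta>. omega1_target sA sL br \<beta> \<longrightarrow> (\<exists>F. g_Z2 sA sL br F \<and> Psi_eq br F \<beta>))"
proof -
  have p1: "\<forall>W \<phi>. alt13 sA sL br W \<and> H2_lift sA sL br \<phi> \<and> g_B2 sA sL br (Phi_rep W \<phi>) \<longrightarrow>
        W = (\<lambda>a x b y. 0) \<and> (\<forall>a. B2 sL br (\<phi> a))"
    using part1[OF two] by blast
  have p2: "\<forall>F. g_Z2 sA sL br F \<longrightarrow>
        (Psi_eq br F (\<lambda>a b. (\<lambda>x y z. 0)) \<longleftrightarrow>
         (\<exists>W \<phi>. alt13 sA sL br W \<and> H2_lift sA sL br \<phi> \<and>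
                 g_B2 sA sL br (\<lambda>a x b y. F a x b y - Phi_rep W \<phi> a x b y)))"
    using part2_fwd[OF two A k] part2_back[OF k] by blast
  have p3: "\<forall>\<beta>. omega1_target sA sL br \<beta> \<longrightarrow> (\<exists>F. g_Z2 sA sL br F \<and> Psi_eq br F \<beta>)"
    using part3[OF two A k] by blast
  show ?thesis using p1 p2 p3 by blast
qed

end
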